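(* Let $N=2n$, and let $B_1,B_2$ be finite tensor products of crystals of the forms $B^{t}$ and $B^{s\vee}$ ($s,t\ge1$) of type $A^{(1)}_{N-1}$. For $b_i\in B_i$, if $R_{B_2,B_1}(b_2\otimes b_1)=b_1'\otimes b_2'$, then $R_{\mathrm{rev}(B_1),\mathrm{rev}(B_2)}(b_1^*\otimes b_2^* )=b_2'^*\otimes b_1'^*$.
   Context: $B^1$ is the $U_q'(A^{(1)}_{N-1})$-crystal with elements $1,\dots,N$, $f_i(i)=i+1$ for $1\le i\le N-1$, $f_0(N)=1$ (all other $f_i$ zero). $B^t$ ($=B^{1,t}$) is the Kirillov–Reshetikhin crystal whose elements are weakly increasing words $b_t\cdots b_1$ of length $t$ in $1<\dots<N$; $B^{s\vee}$ is its contragredient dual (elements $b^\vee$, $f_i(b^\vee)=e_i(b)^\vee$); $B^{1\vee}$ has elements $j^\vee$, viewed as totally ordered $N^\vee<\dots<1^\vee$, and elements of $B^{s\vee}$ are weakly increasing words in this order. Tensor product convention: $f_i(b_2\otimes b_1)=f_i(b_2)\otimes b_1$ if $\varepsilon_i(b_2)\ge\varphi_i(b_1)$ and $b_2\otimes f_i(b_1)$ otherwise. The involution $*$: on letters $j^*=N+1-j$ and $(j^\vee)^*=(N+1-j)^\vee$; on a word (element of $B^t$ or $B^{s\vee}$) $(x_m\cdots x_1)^*=x_1^*\cdots x_m^*$; on tensor products $(x_m\otimes\cdots\otimes x_1)^*=x_1^*\otimes\cdots\otimes x_m^*$. For a tensor product $B=X_m\otimes\cdots\otimes X_1$, $\mathrm{rev}(B)=X_1\otimes\cdots\otimes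 X_m$, so $*:B\to\mathrm{rev}(B)$. For tensor products $X,Y$ of such crystals, $R_{X,Y}:X\otimes Y\to Y\otimes X$ is the unique crystal isomorphism (combinatorial $R$-matrix). *)

theory Defs
  imports Main
begin

text \<open>Letters are naturals 1..N, Dirac indices i in {0..<N}.
A factor is either B^t (Sym t) or the dual B^(s vee) (Dual s).
An element of Sym t is the word b_t...b_1 stored as the list [b_t,...,b_1] (weakly increasing).
An element of Dual s is the word x_s...x_1 of dual letters j^vee, stored as the list of the
underlying j's in written order; weakly increasing in the dual order means numerically
weakly decreasing. Its underlying element b of B^s is the reversed (ascending) list.\<close>

datatype kind = Sym nat | Dual nat

definition kind_ok :: "kind \<Rightarrow> bool" where
  "kind_ok k = (case k of Sym t \<Rightarrow> t \<ge> 1 | Dual s \<Rightarrow> s \<ge> 1)"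

fun elemsK :: "nat \<Rightarrow> kind \<Rightarrow> nat list set" where
  "elemsK N (Sym t) = {w. length w = t \<and> sorted w \<and> set w \<subseteq> {1..N}}"
| "elemsK N (Dual s) = {w. length w = s \<and> sorted (rev w) \<and> set w \<subseteq> {1..N}}"

text \<open>Tensor product X_m \<otimes> ... \<otimes> X_1 is the kind list [X_m,...,X_1];
its elements are lists [x_m,...,x_1].\<close>
definition elemsT :: "nat \<Rightarrow> kind list \<Rightarrow> nat list list set" where
  "elemsT N ks = {xs. list_all2 (\<lambda>k x. x \<in> elemsK N k) ks xs}"

definition epsS :: "nat \<Rightarrow> nat \<Rightarrow> nat list \<Rightarrow> nat" where
  "epsS N i w = (if i = 0 then count_list w 1 else count_list w (i+1))"

definition phiS :: "nat \<Rightarrow> nat \<Rightarrow> nat list \<Rightarrow> nat" where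
  "phiS N i w = (if i = 0 then count_list w N else count_list w i)"

definition fS :: "nat \<Rightarrow> nat \<Rightarrow> nat list \<Rightarrow> nat list option" where
  "fS N i w = (if i = 0 then (if N \<in> set w then Some (sort (1 # remove1 N w)) else None)
               else (if i \<in> set w then Some (sort ((i+1) # remove1 i w)) else None))"

definition eS :: "nat \<Rightarrow> nat \<Rightarrow> nat list \<Rightarrow> nat list option" where
  "eS N i w = (if i = 0 then (if 1 \<in> set w then Some (sort (N # remove1 1 w)) else None)
               else (if (i+1) \<in> set w then Some (sort (i # remove1 (i+1) w)) else None))"

text \<open>Factors, with the contragredient dual: f_i(b^vee) = e_i(b)^vee,
eps_i(b^vee) = phi_i(b), phi_i(b^vee) = eps_i(b).\<close>
fun epsK :: "nat \<Rightarrow> kind \<Rightarrow> nat \<Rightarrow> nat list \<Rightarrow> nat" where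
  "epsK N (Sym t) i w = epsS N i w"
| "epsK N (Dual s) i w = phiS N i (rev w)"

fun phiK :: "nat \<Rightarrow> kind \<Rightarrow> nat \<Rightarrow> nat list \<Rightarrow> nat" where
  "phiK N (Sym t) i w = phiS N i w"
| "phiK N (Dual s) i w = epsS N i (rev w)"

fun fK :: "nat \<Rightarrow> kind \<Rightarrow> nat \<Rightarrow> nat list \<Rightarrow> nat list option" where
  "fK N (Sym t) i w = fS N i w"
| "fK N (Dual s) i w = map_option rev (eS N i (rev w))"

text \<open>Tensor products, convention: f_i(b2 \<otimes> b1) = f_i(b2) \<otimes> b1 if eps_i(b2) \<ge> phi_i(b1),
else b2 \<otimes> f_i(b1). Hence eps(b2 \<otimes> b1) = eps(b1) + max(0, eps(b2) - phi(b1)) and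
phi(b2 \<otimes> b1) = phi(b2) + max(0, phi(b1) - eps(b2)). Nat subtraction is truncated.\<close>
fun phiT :: "nat \<Rightarrow> kind list \<Rightarrow> nat \<Rightarrow> nat list list \<Rightarrow> nat" where
  "phiT N (k # ks) i (x # xs) = phiK N k i x + (phiT N ks i xs - epsK N k i x)"
| "phiT N _ i _ = 0"

fun fT :: "nat \<Rightarrow> kind list \<Rightarrow> nat \<Rightarrow> nat list list \<Rightarrow> nat list list option" where
  "fT N (k # ks) i (x # xs) =
     (if epsK N k i x \<ge> phiT N ks i xs
      then map_option (\<lambda>y. y # xs) (fK N k i x)
      else map_option (\<lambda>ys. x # ys) (fT N ks i xs))"
| "fT N _ i _ = None"

text \<open>Crystal isomorphism between tensor products A and B: a bijection of the element
sets commuting with all f_i, i in {0..<N} (hence also with the e_i, their partial inverses).\<close>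
definition crystal_iso :: "nat \<Rightarrow> kind list \<Rightarrow> kind list \<Rightarrow> (nat list list \<Rightarrow> nat list list) \<Rightarrow> bool" where
  "crystal_iso N A B R \<longleftrightarrow> bij_betw R (elemsT N A) (elemsT N B) \<and>
     (\<forall>b \<in> elemsT N A. \<forall>i < N. map_option R (fT N A i b) = fT N B i (R b))"

definition starW :: "nat \<Rightarrow> nat list \<Rightarrow> nat list" where
  "starW N w = rev (map (\<lambda>j. N + 1 - j) w)"

definition starT :: "nat \<Rightarrow> nat list list \<Rightarrow> nat list list" where
  "starT N xs = rev (map (starW N) xs)"

end

theory Submission
  imports Defs "HOL-Library.Multiset"
begin


fun epsT :: "nat \<Rightarrow> kind list \<Rightarrow> nat \<Rightarrow> nat list list \<Rightarrow> nat" where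
  "epsT N (k # ks) i (x # xs) = epsT N ks i xs + (epsK N k i x - phiT N ks i xs)"
| "epsT N _ i _ = 0"

lemma count_pos[simp]: "0 < count_list x a \<longleftrightarrow> a \<in> set x"
  using count_list_0_iff[of x a] by linarith

lemma fK_phi: "fK N k i x \<noteq> None \<Longrightarrow> phiK N k i x > 0"
  by (cases k) (auto simp: fS_def phiS_def eS_def epsS_def count_list_0_iff split: if_splits)

lemma fT_phi: "fT N ks i xs \<noteq> None \<Longrightarrow> phiT N ks i xs > 0"
proof (induction N ks i xs rule: fT.induct)
  case (1 N k ks i x xs)
  then show ?case using fK_phi[of N k i x] by (auto split: if_splits)
qed auto

lemma append_T:
  assumes "length xsa = length ksa"
  shows "phiT N (ksa@ksb) i (xsa@xsb) = phiT N ksa i xsa + (phiT N ksb i xsb - epsT N ksa i xsa)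
   \<and> epsT N (ksa@ksb) i (xsa@xsb) = epsT N ksb i xsb + (epsT N ksa i xsa - phiT N ksb i xsb)
   \<and> fT N (ksa@ksb) i (xsa@xsb) = (if epsT N ksa i xsa \<ge> phiT N ksb i xsb
        then map_option (\<lambda>y. y@xsb) (fT N ksa i xsa) else map_option (\<lambda>y. xsa@y) (fT N ksb i xsb))"
  using assms
proof (induction ksa arbitrary: xsa)
  case Nil
  then show ?case using fT_phi[of N ksb i xsb] by (cases "fT N ksb i xsb") auto
next
  case (Cons k ksa)
  then obtain x xsa' where xsa: "xsa = x # xsa'" and len: "length xsa' = length ksa"
    by (cases xsa) auto
  note IH = Cons.IH[OF len]
  obtain P1 E1 P2 E2 A where d: "P1 = phiT N ksa i xsa'" "E1 = epsT N ksa i xsa'"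
    "P2 = phiT N ksb i xsb" "E2 = epsT N ksb i xsb" "A = epsK N k i x" by blast
  have p: "phiT N (ksa @ ksb) i (xsa' @ xsb) = P1 + (P2 - E1)" using IH d by simp
  have e: "epsT N (ksa @ ksb) i (xsa' @ xsb) = E2 + (E1 - P2)" using IH d by simp
  show ?case unfolding xsa
    apply (simp add: p e option.map_comp o_def d[symmetric])
    using IH d by (auto simp: option.map_comp o_def)
qed



lemma cl_mset: "count_list l a = count (mset l) a" by (simp add: count_mset)

lemma fK_eps_phi:
  assumes "fK N k i x = Some y" "N \<ge> 2"
  shows "epsK N k i y = Suc (epsK N k i x) \<and> phiK N k i y = phiK N k i x - 1"
  using assms
  by (cases k) (auto simp: fS_def eS_def epsS_def phiS_def cl_mset split: if_splits)

lemma fK_some_iff: "fK N k i x \<noteq> None \<longleftrightarrow> phiK N k i x > 0"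
  by (cases k) (auto simp: fS_def phiS_def eS_def epsS_def split: if_splits)

lemma fT_phi_dec:
  assumes "fT N ks i xs = Some ys" "N \<ge> 2"
  shows "phiT N ks i ys = phiT N ks i xs - 1"
  using assms
proof (induction N ks i xs arbitrary: ys rule: fT.induct)
  case (1 N k ks i x xs)
  show ?case
  proof (cases "epsK N k i x \<ge> phiT N ks i xs")
    case True
    then obtain x' where x': "fK N k i x = Some x'" "ys = x' # xs" using 1 by auto
    then show ?thesis using fK_eps_phi[OF x'(1) \<open>N\<ge>2\<close>] True by auto
  next
    case False
    then obtain xs' where x': "fT N ks i xs = Some xs'" "ys = x # xs'" using 1 by auto
    then show ?thesis using 1(1)[OF _ x'(1) \<open>N\<ge>2\<close>] False by auto
  qed
qed auto

lemma repl:
  assumes "a \<in> set x"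
  shows "length (sort (b # remove1 a x)) = length x \<and> sorted (sort (b # remove1 a x))
    \<and> set (sort (b # remove1 a x)) \<subseteq> insert b (set x)
    \<and> mset (sort (b # remove1 a x)) = add_mset b (mset x - {#a#})"
proof -
  have "set (remove1 a x) \<subseteq> set x" by (rule set_remove1_subset)
  moreover have "length (remove1 a x) = length x - 1" using assms by (simp add: length_remove1)
  moreover have "length x > 0" using assms by (cases x) auto
  ultimately show ?thesis
    by (simp only: length_sort set_sort mset_sort sorted_sort) (auto simp: length_remove1)
qed

lemma fK_elems:
  assumes "fK N k i x = Some y" "x \<in> elemsK N k" "i < N"
  shows "y \<in> elemsK N k"
proof (cases k)
  case (Sym t)
  show ?thesis
  proof (cases "i = 0")
    case True
    then have "N \<in> set x" "y = sort (1 # remove1 N x)" using assms Sym by (auto simp: fS_def split: if_splits)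
    then show ?thesis using repl[of N x 1] assms Sym by auto
  next
    case False
    then have "i \<in> set x" "y = sort ((i+1) # remove1 i x)" using assms Sym by (auto simp: fS_def split: if_splits)
    then show ?thesis using repl[of i x "i+1"] assms Sym False by auto
  qed
next
  case (Dual t)
  show ?thesis
  proof (cases "i = 0")
    case True
    then have "1 \<in> set (rev x)" "y = rev (sort (N # remove1 1 (rev x)))" using assms Dual by (auto simp: eS_def split: if_splits)
    then show ?thesis using repl[of 1 "rev x" N] assms Dual by auto
  next
    case False
    then have "i+1 \<in> set (rev x)" "y = rev (sort (i # remove1 (i+1) (rev x)))" using assms Dual by (auto simp: eS_def split: if_splits)
    then show ?thesis using repl[of "i+1" "rev x" i] assms Dual False by auto
  qed
qed



lemma elemsT_Nil[simp]: "xs \<in> elemsT N [] \<longleftrightarrow> xs = []"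
  by (simp add: elemsT_def)

lemma elemsT_Cons[simp]: "x # xs \<in> elemsT N (k # ks) \<longleftrightarrow> x \<in> elemsK N k \<and> xs \<in> elemsT N ks"
  by (simp add: elemsT_def)

lemma elemsT_Cons2: "xs \<in> elemsT N (k # ks) \<longleftrightarrow> (\<exists>y ys. xs = y # ys \<and> y \<in> elemsK N k \<and> ys \<in> elemsT N ks)"
  by (cases xs) (auto simp: elemsT_def)

lemma elemsT_len: "xs \<in> elemsT N ks \<Longrightarrow> length xs = length ks"
  by (auto simp: elemsT_def list_all2_lengthD)

lemma elemsT_append: "xs \<in> elemsT N (ks1 @ ks2) \<longleftrightarrow> (\<exists>a b. xs = a @ b \<and> a \<in> elemsT N ks1 \<and> b \<in> elemsT N ks2)"
  unfolding elemsT_def list_all2_append1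
proof safe
  fix a b assume "list_all2 (\<lambda>k x. x \<in> elemsK N k) ks1 a" "list_all2 (\<lambda>k x. x \<in> elemsK N k) ks2 b"
  then show "\<exists>us vs. a @ b = us @ vs \<and> length us = length ks1 \<and> length vs = length ks2 \<and>
     list_all2 (\<lambda>k x. x \<in> elemsK N k) ks1 us \<and> list_all2 (\<lambda>k x. x \<in> elemsK N k) ks2 vs"
    by (intro exI[of _ a] exI[of _ b]) (simp add: list_all2_lengthD)
qed auto

lemma elemsT_append2[simp]: "length a = length ks1 \<Longrightarrow> a @ b \<in> elemsT N (ks1 @ ks2) \<longleftrightarrow> a \<in> elemsT N ks1 \<and> b \<in> elemsT N ks2"
  by (auto simp: elemsT_def list_all2_append)

lemma fT_elems:
  assumes "fT N ks i xs = Some ys" "xs \<in> elemsT N ks" "i < N"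
  shows "ys \<in> elemsT N ks"
  using assms
proof (induction N ks i xs arbitrary: ys rule: fT.induct)
  case (1 N k ks i x xs)
  show ?case
  proof (cases "epsK N k i x \<ge> phiT N ks i xs")
    case True
    then obtain x' where x': "fK N k i x = Some x'" "ys = x' # xs" using 1 by auto
    then show ?thesis using fK_elems[OF x'(1)] 1 by auto
  next
    case False
    then obtain xs' where x': "fT N ks i xs = Some xs'" "ys = x # xs'" using 1 by auto
    then show ?thesis using 1(1)[OF _ x'(1)] 1 False by auto
  qed
qed auto

definition sig :: "nat \<Rightarrow> nat \<Rightarrow> nat" where "sig N i = (if i = 0 then 0 else N - i)"

lemma g_eq:
  fixes y N a :: nat
  assumes "y \<in> {1..N}" shows "(N + 1 - y = a) \<longleftrightarrow> (a \<in> {1..N} \<and> y = N + 1 - a)"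
proof
  assume h: "N+1-y = a" show "a \<in> {1..N} \<and> y = N + 1 - a"
  proof -
    have "1 \<le> y" "y \<le> N" using assms by auto
    then show ?thesis unfolding atLeastAtMost_iff using h by (intro conjI; arith)
  qed
next
  assume "a \<in> {1..N} \<and> y = N + 1 - a" then show "N+1-y = a" using assms by auto
qed

lemma count_map_g:
  fixes x :: "nat list"
  assumes "set x \<subseteq> {1..N}"
  shows "count_list (map (\<lambda>j. N + 1 - j) x) a = (if a \<in> {1..N} then count_list x (N+1-a) else 0)"
  using assms
proof (induction x)
  case (Cons y x)
  have y: "y \<in> {1..N}" using Cons.prems by auto
  have IH: "count_list (map (\<lambda>j. N + 1 - j) x) a = (if a \<in> {1..N} then count_list x (N+1-a) else 0)"
    using Cons by auto
  have e: "(N + 1 - y = a) \<longleftrightarrow> (a \<in> {1..N} \<and> y = N + 1 - a)" by (rule g_eq[OF y])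
  show ?case
  proof (cases "a \<in> {1..N}")
    case True
    then show ?thesis using IH e by auto
  next
    case False
    then show ?thesis using IH e by auto
  qed
qed simp

lemma count_star:
  assumes "set x \<subseteq> {1..N}"
  shows "count_list (starW N x) a = (if a \<in> {1..N} then count_list x (N+1-a) else 0)"
  using count_map_g[OF assms] by (simp add: starW_def)



lemma mset_star: "mset (starW N l) = image_mset (\<lambda>j. N + 1 - j) (mset l)"
  by (simp add: starW_def)

lemma sort_eq_mset: "sorted l \<Longrightarrow> mset l = mset m \<Longrightarrow> sort m = l"
  by (rule properties_for_sort) auto

lemma sorted_star_sym: "sorted x \<Longrightarrow> sorted (rev (map (\<lambda>j. (N::nat) + 1 - j) x))"
  by (induction x) (auto simp: sorted_append)

lemma sorted_star_dual: "sorted (rev x) \<Longrightarrow> sorted (map (\<lambda>j. (N::nat) + 1 - j) x)"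
  by (induction x) (auto simp: sorted_append)

lemma star_set: "set x \<subseteq> {1..N} \<Longrightarrow> set (starW N x) \<subseteq> {1..N}"
  by (auto simp: starW_def subset_iff)

lemma star_elems: "x \<in> elemsK N k \<Longrightarrow> starW N x \<in> elemsK N k"
proof (cases k)
  case (Sym t)
  moreover assume "x \<in> elemsK N k"
  moreover have "sorted (rev (map (\<lambda>j. N + 1 - j) x))" if "sorted x" using sorted_star_sym that by blast
  ultimately show ?thesis using star_set[of x N] by (simp add: starW_def)
next
  case (Dual t)
  moreover assume "x \<in> elemsK N k"
  moreover have "sorted (map (\<lambda>j. N + 1 - j) x)" if "sorted (rev x)" using sorted_star_dual that by blast
  ultimately show ?thesis using star_set[of x N] by (simp add: starW_def)
qed

lemma img_diff: "a \<in># M \<Longrightarrow> image_mset g (M - {#a#}) = image_mset g M - {#g a#}"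
  by (simp add: image_mset_Diff)

lemma in_img: "a \<in># M \<Longrightarrow> g a \<in># image_mset g M" by simp

lemma star_f:
  assumes "fK N k i x = Some y" "x \<in> elemsK N k" "i < N" "N \<ge> 2"
  shows "fK N k (sig N i) (starW N y) = Some (starW N x)"
proof -
  define g where "g = (\<lambda>j. N + 1 - j)"
  have ms: "mset (starW N l) = image_mset g (mset l)" for l by (simp add: mset_star g_def)
  have sx: "starW N x \<in> elemsK N k" by (rule star_elems[OF assms(2)])
  show ?thesis
  proof (cases k)
    case (Sym t)
    show ?thesis
    proof (cases "i = 0")
      case True
      then have xN: "N \<in> set x" and y: "y = sort (1 # remove1 N x)" using assms Sym by (auto simp: fS_def split: if_splits)
      have my: "mset y = add_mset 1 (mset x - {#N#})" using repl[OF xN, of 1] y by simp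
      have gN: "g N = 1" "g 1 = N" by (auto simp: g_def)
      have "N \<in># mset (starW N y)" unfolding ms my using gN by simp
      then have "N \<in> set (starW N y)" by simp
      then have "fK N k (sig N i) (starW N y) = Some (sort (1 # remove1 N (starW N y)))"
        using Sym True by (simp add: sig_def fS_def del: sort_key_simps)
      moreover have "sort (1 # remove1 N (starW N y)) = starW N x"
      proof (rule sort_eq_mset)
        show "sorted (starW N x)" using sx Sym by simp
        have "N \<in># mset x" using xN by simp
        moreover have "g N \<in># image_mset g (mset x)" using xN by simp
        ultimately show "mset (starW N x) = mset (1 # remove1 N (starW N y))"
          using gN by (simp add: img_diff ms my)
      qed
      ultimately show ?thesis by simp
    next
      case False
      then have xi: "i \<in> set x" and y: "y = sort ((i+1) # remove1 i x)" using assms Sym by (auto simp: fS_def split: if_splits)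
      have my: "mset y = add_mset (i+1) (mset x - {#i#})" using repl[OF xi, of "i+1"] y by simp
      have gi: "g (i+1) = N - i" "g i = N - i + 1" "N - i \<noteq> 0" using False assms(3) by (auto simp: g_def)
      have "N - i \<in># mset (starW N y)" unfolding ms my using gi by simp
      then have "N - i \<in> set (starW N y)" by simp
      then have "fK N k (sig N i) (starW N y) = Some (sort ((N - i + 1) # remove1 (N - i) (starW N y)))"
        using Sym False gi by (simp add: sig_def fS_def del: sort_key_simps)
      moreover have "sort ((N - i + 1) # remove1 (N - i) (starW N y)) = starW N x"
      proof (rule sort_eq_mset)
        show "sorted (starW N x)" using sx Sym by simp
        have "i \<in># mset x" using xi by simp
        moreover have "g i \<in># image_mset g (mset x)" using xi by simp
        ultimately show "mset (starW N x) = mset ((N - i + 1) # remove1 (N - i) (starW N y))"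
          using gi by (simp add: img_diff ms my)
      qed
      ultimately show ?thesis by simp
    qed
  next
    case (Dual t)
    have "sorted (rev x)" using assms(2) Dual by simp
    then have sxd: "sorted (map g x)" unfolding g_def by (rule sorted_star_dual)
    have rs: "rev (starW N l) = map g l" for l by (simp add: starW_def g_def)
    show ?thesis
    proof (cases "i = 0")
      case True
      then have x1: "1 \<in> set (rev x)" and y: "y = rev (sort (N # remove1 1 (rev x)))" using assms Dual by (auto simp: eS_def split: if_splits)
      have my: "mset y = add_mset N (mset x - {#1#})" using repl[OF x1, of N] y by simp
      have gN: "g N = 1" "g 1 = N" by (auto simp: g_def)
      have "1 \<in># mset (map g y)" using gN by (simp add: my)
      then have "1 \<in> set (map g y)" by simp
      then have "fK N k (sig N i) (starW N y) = Some (rev (sort (N # remove1 1 (map g y))))"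
        using Dual True by (simp add: sig_def eS_def rs del: sort_key_simps)
      moreover have "sort (N # remove1 1 (map g y)) = map g x"
      proof (rule sort_eq_mset)
        show "sorted (map g x)" by (rule sxd)
        have "1 \<in># mset x" using x1 by simp
        moreover have "g 1 \<in># image_mset g (mset x)" using x1 by simp
        then have "N \<in># image_mset g (mset x)" using gN by simp
        ultimately show "mset (map g x) = mset (N # remove1 1 (map g y))"
          using gN by (simp add: img_diff my)
      qed
      ultimately show ?thesis by (simp add: starW_def g_def)
    next
      case False
      then have xi: "i+1 \<in> set (rev x)" and y: "y = rev (sort (i # remove1 (i+1) (rev x)))" using assms Dual by (auto simp: eS_def split: if_splits)
      have my: "mset y = add_mset i (mset x - {#i+1#})" using repl[OF xi, of i] y by simp
      have gi: "g (i+1) = N - i" "g i = N - i + 1" "N - i \<noteq> 0" using False assms(3) by (auto simp: g_def)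
      have "N - i + 1 \<in># mset (map g y)" using gi by (simp add: my)
      then have "N - i + 1 \<in> set (map g y)" by simp
      then have "fK N k (sig N i) (starW N y) = Some (rev (sort ((N - i) # remove1 (N - i + 1) (map g y))))"
        using Dual False gi by (simp add: sig_def eS_def rs del: sort_key_simps)
      moreover have "sort ((N - i) # remove1 (N - i + 1) (map g y)) = map g x"
      proof (rule sort_eq_mset)
        show "sorted (map g x)" by (rule sxd)
        have "i + 1 \<in># mset x" using xi by simp
        moreover have "g (i+1) \<in># image_mset g (mset x)" using xi by simp
        then have "N - i \<in># image_mset g (mset x)" using gi by simp
        ultimately show "mset (map g x) = mset ((N - i) # remove1 (N - i + 1) (map g y))"
          using gi by (simp add: img_diff my)
      qed
      ultimately show ?thesis by (simp add: starW_def g_def)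
    qed
  qed
qed



lemma star_eps_phi:
  assumes "x \<in> elemsK N k" "i < N" "N \<ge> 2"
  shows "epsK N k (sig N i) (starW N x) = phiK N k i x \<and> phiK N k (sig N i) (starW N x) = epsK N k i x"
proof -
  have sx: "set x \<subseteq> {1..N}" using assms(1) by (cases k) auto
  note cs = count_star[OF sx]
  show ?thesis
  proof (cases "i = 0")
    case True
    have a: "N + 1 - 1 = N" "N + 1 - N = 1" "(1::nat) \<in> {1..N}" "N \<in> {1..N}" using assms by auto
    show ?thesis using True a by (cases k) (simp_all add: sig_def epsS_def phiS_def cs)
  next
    case False
    have a: "N + 1 - (N - i + 1) = i" "N + 1 - (N - i) = i + 1" "N - i + 1 \<in> {1..N}" "N - i \<in> {1..N}"
      "N - i \<noteq> 0" using assms False by auto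
    show ?thesis using False a by (cases k) (simp_all add: sig_def epsS_def phiS_def cs)
  qed
qed

lemma starT_Cons[simp]: "starT N (x # xs) = starT N xs @ [starW N x]"
  by (simp add: starT_def)

lemma sig_lt: "i < N \<Longrightarrow> sig N i < N"
  by (simp add: sig_def)

lemma star_T_eps_phi:
  assumes "xs \<in> elemsT N ks" "i < N" "N \<ge> 2"
  shows "epsT N (rev ks) (sig N i) (starT N xs) = phiT N ks i xs \<and> phiT N (rev ks) (sig N i) (starT N xs) = epsT N ks i xs"
  using assms
proof (induction ks arbitrary: xs)
  case Nil
  then show ?case by (simp add: starT_def)
next
  case (Cons k ks)
  then obtain x xs' where xs: "xs = x # xs'" "x \<in> elemsK N k" "xs' \<in> elemsT N ks"
    by (auto simp: elemsT_Cons2)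
  have len: "length (starT N xs') = length (rev ks)" using elemsT_len[OF xs(3)] by (simp add: starT_def)
  have st: "starT N xs = starT N xs' @ [starW N x]" using xs by (simp add: starT_def)
  note ap = append_T[OF len, where N=N and ksb="[k]" and xsb="[starW N x]" and i="sig N i"]
  note IH = Cons.IH[OF xs(3) assms(2,3)]
  note se = star_eps_phi[OF xs(2) assms(2,3)]
  show ?case using ap IH se xs(1) by simp
qed

lemma star_T_f:
  assumes "fT N ks i xs = Some ys" "xs \<in> elemsT N ks" "i < N" "N \<ge> 2"
  shows "fT N (rev ks) (sig N i) (starT N ys) = Some (starT N xs)"
  using assms
proof (induction ks arbitrary: xs ys)
  case Nil
  then show ?case by simp
next
  case (Cons k ks)
  then obtain x xs' where xs: "xs = x # xs'" "x \<in> elemsK N k" "xs' \<in> elemsT N ks"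
    by (auto simp: elemsT_Cons2)
  have len: "length (starT N xs') = length (rev ks)" using elemsT_len[OF xs(3)] by (simp add: starT_def)
  show ?case
  proof (cases "epsK N k i x \<ge> phiT N ks i xs'")
    case True
    then obtain x' where x': "fK N k i x = Some x'" "ys = x' # xs'" using Cons.prems xs by auto
    have st: "starT N ys = starT N xs' @ [starW N x']" using x' by (simp add: starT_def)
    have x'e: "x' \<in> elemsK N k" using fK_elems[OF x'(1) xs(2) assms(3)] .
    note ap = append_T[OF len, where N=N and ksb="[k]" and xsb="[starW N x']" and i="sig N i"]
    have e1: "epsT N (rev ks) (sig N i) (starT N xs') = phiT N ks i xs'"
      using star_T_eps_phi[OF xs(3) assms(3,4)] by simp
    have e2: "phiK N k (sig N i) (starW N x') = epsK N k i x'"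
      using star_eps_phi[OF x'e assms(3,4)] by simp
    have e3: "epsK N k i x' = Suc (epsK N k i x)" using fK_eps_phi[OF x'(1) assms(4)] by simp
    have f: "fK N k (sig N i) (starW N x') = Some (starW N x)" by (rule star_f[OF x'(1) xs(2) assms(3,4)])
    show ?thesis unfolding st using ap e1 e2 e3 f True xs(1) by (simp add: starT_def)
  next
    case False
    then obtain ys' where y': "fT N ks i xs' = Some ys'" "ys = x # ys'" using Cons.prems xs by auto
    have st: "starT N ys = starT N ys' @ [starW N x]" using y' by (simp add: starT_def)
    have ys'e: "ys' \<in> elemsT N ks" using fT_elems[OF y'(1) xs(3) assms(3)] .
    have len': "length (starT N ys') = length (rev ks)" using elemsT_len[OF ys'e] by (simp add: starT_def)
    note ap = append_T[OF len', where N=N and ksb="[k]" and xsb="[starW N x]" and i="sig N i"]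
    have e1: "epsT N (rev ks) (sig N i) (starT N ys') = phiT N ks i ys'"
      using star_T_eps_phi[OF ys'e assms(3,4)] by simp
    have e2: "phiK N k (sig N i) (starW N x) = epsK N k i x"
      using star_eps_phi[OF xs(2) assms(3,4)] by simp
    have e3: "phiT N ks i ys' = phiT N ks i xs' - 1" by (rule fT_phi_dec[OF y'(1) assms(4)])
    have IH: "fT N (rev ks) (sig N i) (starT N ys') = Some (starT N xs')"
      by (rule Cons.IH[OF y'(1) xs(3) assms(3,4)])
    have c: "epsK N k i x \<le> phiT N ks i xs' - 1" using False by arith
    show ?thesis unfolding st using ap e1 e2 e3 IH c xs(1) by simp
  qed
qed



fun uK :: "nat \<Rightarrow> kind \<Rightarrow> nat list" where
  "uK N (Sym t) = replicate t 1" | "uK N (Dual s) = replicate s N"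
fun vK :: "nat \<Rightarrow> kind \<Rightarrow> nat list" where
  "vK N (Sym t) = replicate t N" | "vK N (Dual s) = replicate s 1"
definition uT :: "nat \<Rightarrow> kind list \<Rightarrow> nat list list" where "uT N ks = map (uK N) ks"
definition vT :: "nat \<Rightarrow> kind list \<Rightarrow> nat list list" where "vT N ks = map (vK N) ks"

definition kstep :: "nat \<Rightarrow> kind \<Rightarrow> nat set \<Rightarrow> nat list \<Rightarrow> nat list \<Rightarrow> bool" where
  "kstep N k I a b \<longleftrightarrow> (\<exists>i\<in>I. fK N k i a = Some b)"
definition fstep :: "nat \<Rightarrow> kind list \<Rightarrow> nat set \<Rightarrow> nat list list \<Rightarrow> nat list list \<Rightarrow> bool" where
  "fstep N ks I a b \<longleftrightarrow> (\<exists>i\<in>I. fT N ks i a = Some b)"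

lemma uK_elems: "N \<ge> 1 \<Longrightarrow> uK N k \<in> elemsK N k" by (cases k) auto
lemma vK_elems: "N \<ge> 1 \<Longrightarrow> vK N k \<in> elemsK N k" by (cases k) auto

lemma uv_eps_phi:
  assumes "N \<ge> 2"
  shows "0 < i \<Longrightarrow> i < N \<Longrightarrow> epsK N k i (uK N k) = 0"
    "0 < i \<Longrightarrow> i < N \<Longrightarrow> phiK N k i (vK N k) = 0"
    "epsK N k 0 (vK N k) = 0" "phiK N k 0 (uK N k) = 0"
  using assms by (cases k; auto simp: epsS_def phiS_def count_list_0_iff)+

lemma uvT_eps_phi:
  assumes "N \<ge> 2"
  shows "0 < i \<Longrightarrow> i < N \<Longrightarrow> epsT N ks i (uT N ks) = 0"
    "0 < i \<Longrightarrow> i < N \<Longrightarrow> phiT N ks i (vT N ks) = 0"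
    "epsT N ks 0 (vT N ks) = 0" "phiT N ks 0 (uT N ks) = 0"
  using assms by (induction ks) (auto simp: uT_def vT_def uv_eps_phi)

lemma fT_len: "fT N ks i c = Some c' \<Longrightarrow> length c' = length c"
  by (induction N ks i c arbitrary: c' rule: fT.induct) (auto split: if_splits)

lemma lift_X:
  assumes "length c = length ks" "epsT N ks i c = 0" "fK N k i x = Some x'"
  shows "fT N (ks @ [k]) i (c @ [x]) = Some (c @ [x'])"
proof -
  have "phiK N k i x > 0" using assms(3) fK_some_iff by blast
  then show ?thesis using append_T[OF assms(1), where ksb="[k]" and xsb="[x]" and N=N and i=i] assms by simp
qed

lemma lift_C:
  assumes "length c = length ks" "phiK N k i x = 0" "fT N ks i c = Some c'"
  shows "fT N (ks @ [k]) i (c @ [x]) = Some (c' @ [x])"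
  using append_T[OF assms(1), where ksb="[k]" and xsb="[x]" and N=N and i=i] assms by simp

lemma lift_L:
  assumes "length c = length ks" "fT N ks i c = Some c'" "x \<in> elemsK N k" "i < N" "N \<ge> 2"
  shows "\<exists>x'\<in>elemsK N k. (fstep N (ks @ [k]) {i})\<^sup>*\<^sup>* (c @ [x]) (c' @ [x'])"
  using assms(3)
proof (induction "phiK N k i x" arbitrary: x rule: less_induct)
  case less
  note ap = append_T[OF assms(1), where ksb="[k]" and xsb="[x]" and N=N and i=i]
  show ?case
  proof (cases "epsT N ks i c \<ge> phiK N k i x")
    case True
    then have "fT N (ks @ [k]) i (c @ [x]) = Some (c' @ [x])" using ap assms(2) by simp
    then have "fstep N (ks @ [k]) {i} (c @ [x]) (c' @ [x])" by (simp add: fstep_def)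
    then show ?thesis using less.prems by blast
  next
    case False
    then have "phiK N k i x > 0" by simp
    then obtain x1 where x1: "fK N k i x = Some x1" using fK_some_iff by blast
    have st: "fT N (ks @ [k]) i (c @ [x]) = Some (c @ [x1])" using ap False x1 by simp
    have x1e: "x1 \<in> elemsK N k" using fK_elems[OF x1 less.prems assms(4)] .
    have "phiK N k i x1 < phiK N k i x"
      using fK_eps_phi[OF x1 assms(5)] \<open>phiK N k i x > 0\<close> by simp
    from less.hyps[OF this x1e] obtain x' where "x' \<in> elemsK N k" "(fstep N (ks @ [k]) {i})\<^sup>*\<^sup>* (c @ [x1]) (c' @ [x'])" by blast
    moreover have "fstep N (ks @ [k]) {i} (c @ [x]) (c @ [x1])" using st by (simp add: fstep_def)
    ultimately show ?thesis by (meson converse_rtranclp_into_rtranclp)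
  qed
qed



lemma path_len: "(fstep N ks I)\<^sup>*\<^sup>* c c' \<Longrightarrow> length c' = length c"
  by (induction rule: rtranclp_induct) (auto simp: fstep_def dest: fT_len)

lemma path_X:
  assumes "(kstep N k I)\<^sup>*\<^sup>* x x'" "length c = length ks" "\<forall>i\<in>I. epsT N ks i c = 0"
  shows "(fstep N (ks @ [k]) I)\<^sup>*\<^sup>* (c @ [x]) (c @ [x'])"
  using assms(1)
proof (induction rule: rtranclp_induct)
  case (step y z)
  then obtain i where i: "i \<in> I" "fK N k i y = Some z" by (auto simp: kstep_def)
  then have "epsT N ks i c = 0" using assms(3) by auto
  from lift_X[OF assms(2) this i(2)] i(1) have "fstep N (ks @ [k]) I (c @ [y]) (c @ [z])"
    by (auto simp: fstep_def)
  then show ?case using step.IH by (meson rtranclp.rtrancl_into_rtrancl)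
qed simp

lemma path_C:
  assumes "(fstep N ks I)\<^sup>*\<^sup>* c c'" "length c = length ks" "\<forall>i\<in>I. phiK N k i x = 0"
  shows "(fstep N (ks @ [k]) I)\<^sup>*\<^sup>* (c @ [x]) (c' @ [x])"
  using assms(1)
proof (induction rule: rtranclp_induct)
  case (step y z)
  then obtain i where i: "i \<in> I" "fT N ks i y = Some z" by (auto simp: fstep_def)
  have "length y = length ks" using path_len[OF step.hyps(1)] assms(2) by simp
  moreover have "phiK N k i x = 0" using assms(3) i(1) by auto
  ultimately have "fT N (ks @ [k]) i (y @ [x]) = Some (z @ [x])" using lift_C i(2) by blast
  then have "fstep N (ks @ [k]) I (y @ [x]) (z @ [x])" using i(1) by (auto simp: fstep_def)
  then show ?case using step.IH by (meson rtranclp.rtrancl_into_rtrancl)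
qed simp

lemma path_L:
  assumes "(fstep N ks I)\<^sup>*\<^sup>* c c'" "length c = length ks" "I \<subseteq> {..<N}" "N \<ge> 2" "x \<in> elemsK N k"
  shows "\<exists>x'\<in>elemsK N k. (fstep N (ks @ [k]) I)\<^sup>*\<^sup>* (c @ [x]) (c' @ [x'])"
  using assms(1)
proof (induction rule: rtranclp_induct)
  case base
  then show ?case using assms(5) by blast
next
  case (step y z)
  then obtain x1 where x1: "x1 \<in> elemsK N k" "(fstep N (ks @ [k]) I)\<^sup>*\<^sup>* (c @ [x]) (y @ [x1])" by blast
  obtain i where i: "i \<in> I" "fT N ks i y = Some z" using step.hyps(2) by (auto simp: fstep_def)
  have "length y = length ks" using path_len[OF step.hyps(1)] assms(2) by simp
  from lift_L[OF this i(2) x1(1)] i assms(3,4) obtain x' where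
    x': "x' \<in> elemsK N k" "(fstep N (ks @ [k]) {i})\<^sup>*\<^sup>* (y @ [x1]) (z @ [x'])" by auto
  have "(fstep N (ks @ [k]) I)\<^sup>*\<^sup>* (y @ [x1]) (z @ [x'])"
    using x'(2) by (rule rtranclp_mono[THEN predicate2D, rotated]) (use i(1) in \<open>auto simp: fstep_def\<close>)
  then show ?case using x1(2) x'(1) by (meson rtranclp_trans)
qed

lemma sum_list_mset: "sum_list (map h l) = sum_mset (image_mset h (mset l))"
  by (induction l) auto

lemma sym_to_v:
  assumes "x \<in> elemsK N (Sym t)" "N \<ge> 2"
  shows "(kstep N (Sym t) {0<..<N})\<^sup>*\<^sup>* x (replicate t N)"
  using assms(1)
proof (induction "sum_list (map (\<lambda>a. N - a) x)" arbitrary: x rule: less_induct)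
  case less
  show ?case
  proof (cases "\<forall>a\<in>set x. a = N")
    case True
    then have "x = replicate t N" using less.prems replicate_length_same[of x N] by auto
    then show ?thesis by simp
  next
    case False
    then obtain a where a: "a \<in> set x" "a \<noteq> N" by auto
    have a1: "1 \<le> a" "a < N" using a less.prems by auto
    define y where "y = sort ((a+1) # remove1 a x)"
    have f: "fK N (Sym t) a x = Some y" using a a1 by (simp add: fS_def y_def del: sort_key_simps)
    have ye: "y \<in> elemsK N (Sym t)" using fK_elems[OF f less.prems] a1 by simp
    have my: "mset y = add_mset (a+1) (mset x - {#a#})" using repl[OF a(1), of "a+1"] y_def by simp
    have mx: "mset x = add_mset a (mset x - {#a#})" using a(1) by simp
    have "sum_list (map (\<lambda>a. N - a) y) < sum_list (map (\<lambda>a. N - a) x)"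
      unfolding sum_list_mset using a1 by (subst mx, subst my) simp
    from less.hyps[OF this ye] have "(kstep N (Sym t) {0<..<N})\<^sup>*\<^sup>* y (replicate t N)" .
    moreover have "kstep N (Sym t) {0<..<N} x y" using f a1 by (auto simp: kstep_def)
    ultimately show ?thesis by (meson converse_rtranclp_into_rtranclp)
  qed
qed

lemma dual_to_v:
  assumes "x \<in> elemsK N (Dual t)" "N \<ge> 2"
  shows "(kstep N (Dual t) {0<..<N})\<^sup>*\<^sup>* x (replicate t 1)"
  using assms(1)
proof (induction "sum_list (map (\<lambda>a. a - 1) x)" arbitrary: x rule: less_induct)
  case less
  show ?case
  proof (cases "\<forall>a\<in>set x. a = 1")
    case True
    then have "x = replicate t 1" using less.prems replicate_length_same[of x 1] by auto
    then show ?thesis by simp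
  next
    case False
    then obtain a where a: "a \<in> set x" "a \<noteq> 1" by auto
    have a1: "2 \<le> a" "a \<le> N" using a less.prems by auto
    define y where "y = rev (sort ((a-1) # remove1 a (rev x)))"
    have ar: "a \<in> set (rev x)" using a by simp
    have f: "fK N (Dual t) (a-1) x = Some y" using ar a1 by (simp add: eS_def y_def del: sort_key_simps)
    have ye: "y \<in> elemsK N (Dual t)" using fK_elems[OF f less.prems] a1 by simp
    have my: "mset y = add_mset (a-1) (mset x - {#a#})" using repl[OF ar, of "a-1"] y_def by simp
    have mx: "mset x = add_mset a (mset x - {#a#})" using a(1) by simp
    have "sum_list (map (\<lambda>a. a - 1) y) < sum_list (map (\<lambda>a. a - 1) x)"
      unfolding sum_list_mset using a1 by (subst mx, subst my) simp
    from less.hyps[OF this ye] have "(kstep N (Dual t) {0<..<N})\<^sup>*\<^sup>* y (replicate t 1)" .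
    moreover have "kstep N (Dual t) {0<..<N} x y" using f a1 by (auto simp: kstep_def)
    ultimately show ?thesis by (meson converse_rtranclp_into_rtranclp)
  qed
qed

lemma K_to_v: "x \<in> elemsK N k \<Longrightarrow> N \<ge> 2 \<Longrightarrow> (kstep N k {0<..<N})\<^sup>*\<^sup>* x (vK N k)"
proof (cases k)
  case (Sym t)
  assume "x \<in> elemsK N k" "N \<ge> 2"
  then show ?thesis using sym_to_v[of x N t] Sym by simp
next
  case (Dual t)
  assume "x \<in> elemsK N k" "N \<ge> 2"
  then show ?thesis using dual_to_v[of x N t] Dual by simp
qed

lemma sym_v_u:
  assumes "set x \<subseteq> {1, N}" "N \<ge> 2"
  shows "(kstep N (Sym t) {0})\<^sup>*\<^sup>* x (replicate (length x) 1)"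
  using assms(1)
proof (induction "count_list x N" arbitrary: x rule: less_induct)
  case less
  show ?case
  proof (cases "N \<in> set x")
    case False
    then have "\<forall>a\<in>set x. a = 1" using less.prems by auto
    then have "x = replicate (length x) 1" using replicate_length_same[of x 1] by auto
    then show ?thesis by (metis rtranclp.rtrancl_refl)
  next
    case True
    define y where "y = sort (1 # remove1 N x)"
    have f: "fK N (Sym t) 0 x = Some y" using True by (simp add: fS_def y_def del: sort_key_simps)
    have r: "length y = length x" "set y \<subseteq> insert 1 (set x)" "mset y = add_mset 1 (mset x - {#N#})"
      using repl[OF True, of 1] y_def by auto
    have ys: "set y \<subseteq> {1, N}" using r(2) less.prems by auto
    have "count_list y N < count_list x N" using True assms(2) r(3) by (simp add: cl_mset)
    from less.hyps[OF this ys] have "(kstep N (Sym t) {0})\<^sup>*\<^sup>* y (replicate (length x) 1)" using r(1) by simp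
    moreover have "kstep N (Sym t) {0} x y" using f by (auto simp: kstep_def)
    ultimately show ?thesis by (meson converse_rtranclp_into_rtranclp)
  qed
qed

lemma dual_v_u:
  assumes "set x \<subseteq> {1, N}" "N \<ge> 2"
  shows "(kstep N (Dual t) {0})\<^sup>*\<^sup>* x (replicate (length x) N)"
  using assms(1)
proof (induction "count_list x 1" arbitrary: x rule: less_induct)
  case less
  show ?case
  proof (cases "1 \<in> set x")
    case False
    then have "\<forall>a\<in>set x. a = N" using less.prems by auto
    then have "x = replicate (length x) N" using replicate_length_same[of x N] by auto
    then show ?thesis by (metis rtranclp.rtrancl_refl)
  next
    case True
    then have ar: "1 \<in> set (rev x)" by simp
    define y where "y = rev (sort (N # remove1 1 (rev x)))"
    have f: "fK N (Dual t) 0 x = Some y" using ar by (simp add: eS_def y_def del: sort_key_simps)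
    have r: "length y = length x" "set y \<subseteq> insert N (set x)" "mset y = add_mset N (mset x - {#1#})"
      using repl[OF ar, of N] y_def by auto
    have ys: "set y \<subseteq> {1, N}" using r(2) less.prems by auto
    have "count_list y 1 < count_list x 1" using True assms(2) r(3) by (simp add: cl_mset)
    from less.hyps[OF this ys] have "(kstep N (Dual t) {0})\<^sup>*\<^sup>* y (replicate (length x) N)" using r(1) by simp
    moreover have "kstep N (Dual t) {0} x y" using f by (auto simp: kstep_def)
    ultimately show ?thesis by (meson converse_rtranclp_into_rtranclp)
  qed
qed

lemma K_v_u: "N \<ge> 2 \<Longrightarrow> (kstep N k {0})\<^sup>*\<^sup>* (vK N k) (uK N k)"
proof (cases k)
  case (Sym t)
  assume "N \<ge> 2"
  then show ?thesis using sym_v_u[of "replicate t N" N t] Sym by (simp add: set_replicate_conv_if)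
next
  case (Dual t)
  assume "N \<ge> 2"
  then show ?thesis using dual_v_u[of "replicate t 1" N t] Dual by (simp add: set_replicate_conv_if)
qed



lemma fstep_mono:
  assumes "(fstep N ks I)\<^sup>*\<^sup>* a b" "I \<subseteq> J" shows "(fstep N ks J)\<^sup>*\<^sup>* a b"
proof -
  have h: "fstep N ks I x y \<Longrightarrow> fstep N ks J x y" for x y using assms(2) unfolding fstep_def by blast
  show ?thesis using assms(1)
    by (induction rule: rtranclp_induct) (auto intro: rtranclp.rtrancl_into_rtrancl h)
qed

lemma uT_snoc: "uT N (ks @ [k]) = uT N ks @ [uK N k]" by (simp add: uT_def)
lemma vT_snoc: "vT N (ks @ [k]) = vT N ks @ [vK N k]" by (simp add: vT_def)
lemma uT_len: "length (uT N ks) = length ks" by (simp add: uT_def)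
lemma vT_len: "length (vT N ks) = length ks" by (simp add: vT_def)

lemma U2V: "N \<ge> 2 \<Longrightarrow> (fstep N ks {0<..<N})\<^sup>*\<^sup>* (uT N ks) (vT N ks)"
proof (induction ks rule: rev_induct)
  case Nil
  then show ?case by (simp add: uT_def vT_def)
next
  case (snoc k ks)
  have a: "(fstep N (ks @ [k]) {0<..<N})\<^sup>*\<^sup>* (uT N ks @ [uK N k]) (uT N ks @ [vK N k])"
    by (rule path_X[OF K_to_v[OF uK_elems] uT_len]) (use snoc.prems uvT_eps_phi in auto)
  have b: "(fstep N (ks @ [k]) {0<..<N})\<^sup>*\<^sup>* (uT N ks @ [vK N k]) (vT N ks @ [vK N k])"
    by (rule path_C[OF snoc.IH[OF snoc.prems] uT_len]) (use snoc.prems uv_eps_phi in auto)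
  show ?case using a b by (simp add: uT_snoc vT_snoc)
qed

lemma V2U: "N \<ge> 2 \<Longrightarrow> (fstep N ks {0})\<^sup>*\<^sup>* (vT N ks) (uT N ks)"
proof (induction ks rule: rev_induct)
  case Nil
  then show ?case by (simp add: uT_def vT_def)
next
  case (snoc k ks)
  have a: "(fstep N (ks @ [k]) {0})\<^sup>*\<^sup>* (vT N ks @ [vK N k]) (vT N ks @ [uK N k])"
    by (rule path_X[OF K_v_u vT_len]) (use snoc.prems uvT_eps_phi in auto)
  have b: "(fstep N (ks @ [k]) {0})\<^sup>*\<^sup>* (vT N ks @ [uK N k]) (uT N ks @ [uK N k])"
    by (rule path_C[OF snoc.IH[OF snoc.prems] vT_len]) (use snoc.prems uv_eps_phi in auto)
  show ?case using a b by (simp add: uT_snoc vT_snoc)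
qed

lemma conn: "c \<in> elemsT N ks \<Longrightarrow> N \<ge> 2 \<Longrightarrow> (fstep N ks {..<N})\<^sup>*\<^sup>* c (uT N ks)"
proof (induction ks arbitrary: c rule: rev_induct)
  case Nil
  then show ?case by (simp add: uT_def)
next
  case (snoc k ks)
  obtain a x where c: "c = a @ [x]" "a \<in> elemsT N ks" "x \<in> elemsK N k"
    using snoc.prems(1) by (auto simp: elemsT_append elemsT_Cons2)
  have la: "length a = length ks" using elemsT_len[OF c(2)] .
  obtain x' where x': "x' \<in> elemsK N k" "(fstep N (ks @ [k]) {..<N})\<^sup>*\<^sup>* (a @ [x]) (uT N ks @ [x'])"
    using path_L[OF snoc.IH[OF c(2) snoc.prems(2)] la _ snoc.prems(2) c(3)] by auto
  have s2: "(fstep N (ks @ [k]) {..<N})\<^sup>*\<^sup>* (uT N ks @ [x']) (uT N ks @ [vK N k])"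
    by (rule fstep_mono[OF path_X[OF K_to_v[OF x'(1) snoc.prems(2)] uT_len]]) (use snoc.prems uvT_eps_phi in auto)
  have s3: "(fstep N (ks @ [k]) {..<N})\<^sup>*\<^sup>* (uT N ks @ [vK N k]) (vT N ks @ [vK N k])"
    by (rule fstep_mono[OF path_C[OF U2V[OF snoc.prems(2)] uT_len]]) (use snoc.prems uv_eps_phi in auto)
  have s4: "(fstep N (ks @ [k]) {..<N})\<^sup>*\<^sup>* (vT N ks @ [vK N k]) (vT N ks @ [uK N k])"
    by (rule fstep_mono[OF path_X[OF K_v_u[OF snoc.prems(2)] vT_len]]) (use snoc.prems uvT_eps_phi in auto)
  have s5: "(fstep N (ks @ [k]) {..<N})\<^sup>*\<^sup>* (vT N ks @ [uK N k]) (uT N ks @ [uK N k])"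
    by (rule fstep_mono[OF path_C[OF V2U[OF snoc.prems(2)] vT_len]]) (use snoc.prems uv_eps_phi in auto)
  show ?case unfolding c(1) uT_snoc using x'(2) s2 s3 s4 s5 by (meson rtranclp_trans)
qed



fun ksize :: "kind \<Rightarrow> nat" where "ksize (Sym t) = t" | "ksize (Dual s) = s"
definition sizeT :: "kind list \<Rightarrow> nat" where "sizeT ks = sum_list (map ksize ks)"

fun cntT :: "nat \<Rightarrow> kind list \<Rightarrow> nat list list \<Rightarrow> nat" where
  "cntT N (k # ks) (x # xs) = phiK N k 0 x + cntT N ks xs"
| "cntT N _ _ = 0"

definition f0 :: "nat \<Rightarrow> kind list \<Rightarrow> nat list list \<Rightarrow> nat list list \<Rightarrow> bool" where
  "f0 N ks a b \<longleftrightarrow> fT N ks 0 a = Some b"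

lemma fT0_cnt: "fT N ks 0 xs = Some ys \<Longrightarrow> N \<ge> 2 \<Longrightarrow> cntT N ks xs = Suc (cntT N ks ys)"
proof (induction N ks "0::nat" xs arbitrary: ys rule: fT.induct)
  case (1 N k ks x xs)
  show ?case
  proof (cases "epsK N k 0 x \<ge> phiT N ks 0 xs")
    case True
    then obtain x' where x': "fK N k 0 x = Some x'" "ys = x' # xs" using 1 by auto
    have "phiK N k 0 x > 0" using x'(1) fK_some_iff by blast
    then show ?thesis using fK_eps_phi[OF x'(1) 1(3)] x'(2) by simp
  next
    case False
    then obtain xs' where x': "fT N ks 0 xs = Some xs'" "ys = x # xs'" using 1 by auto
    then show ?thesis using 1(1)[OF _ x'(1) 1(3)] False by simp
  qed
qed auto

lemma relpow_cnt: "(f0 N ks ^^ n) a b \<Longrightarrow> N \<ge> 2 \<Longrightarrow> cntT N ks a = cntT N ks b + n"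
proof (induction n arbitrary: a)
  case (Suc n)
  obtain y where y: "f0 N ks a y" "(f0 N ks ^^ n) y b" using relpowp_Suc_D2[OF Suc.prems(1)] by blast
  have "cntT N ks y = cntT N ks b + n" using Suc.IH[OF y(2) Suc.prems(2)] .
  moreover have "cntT N ks a = Suc (cntT N ks y)" using fT0_cnt[of N ks a y] y(1) Suc.prems(2) by (simp add: f0_def)
  ultimately show ?case by simp
qed simp

lemma relpow_det: "(f0 N ks ^^ n) a b \<Longrightarrow> (f0 N ks ^^ n) a c \<Longrightarrow> b = c"
proof (induction n arbitrary: a)
  case (Suc n)
  obtain y where y: "f0 N ks a y" "(f0 N ks ^^ n) y b" using relpowp_Suc_D2[OF Suc.prems(1)] by blast
  obtain z where z: "f0 N ks a z" "(f0 N ks ^^ n) z c" using relpowp_Suc_D2[OF Suc.prems(2)] by blast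
  have "y = z" using y(1) z(1) by (simp add: f0_def)
  then show ?case using Suc.IH y(2) z(2) by blast
qed simp

lemma f0_fstep: "f0 N ks = fstep N ks {0}"
  by (auto simp: fun_eq_iff f0_def fstep_def)

lemma count_all: "count_list x a = length x \<Longrightarrow> x = replicate (length x) a"
proof (induction x)
  case (Cons y x)
  have "count_list x a \<le> length x" by (rule count_le_length)
  then show ?case using Cons by (auto split: if_splits)
qed simp

lemma phiK0_le: "x \<in> elemsK N k \<Longrightarrow> phiK N k 0 x \<le> ksize k \<and> (phiK N k 0 x = ksize k \<longrightarrow> x = vK N k)"
proof (cases k)
  case (Sym t)
  assume x: "x \<in> elemsK N k"
  have "count_list x N = length x \<Longrightarrow> x = replicate (length x) N" by (rule count_all)
  then show ?thesis using x Sym count_le_length[of x N] by (auto simp: phiS_def)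
next
  case (Dual t)
  assume x: "x \<in> elemsK N k"
  have "count_list x 1 = length x \<Longrightarrow> x = replicate (length x) 1" by (rule count_all)
  then show ?thesis using x Dual count_le_length[of x 1] by (auto simp: epsS_def)
qed



lemma vT_elems: "N \<ge> 1 \<Longrightarrow> vT N ks \<in> elemsT N ks"
  by (induction ks) (auto simp: vT_def vK_elems)
lemma uT_elems: "N \<ge> 1 \<Longrightarrow> uT N ks \<in> elemsT N ks"
  by (induction ks) (auto simp: uT_def uK_elems)

lemma cntT_le: "xs \<in> elemsT N ks \<Longrightarrow> cntT N ks xs \<le> sizeT ks \<and> (cntT N ks xs = sizeT ks \<longrightarrow> xs = vT N ks)"
proof (induction ks arbitrary: xs)
  case Nil
  then show ?case by (simp add: sizeT_def vT_def)
next
  case (Cons k ks)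
  then obtain x xs' where xs: "xs = x # xs'" "x \<in> elemsK N k" "xs' \<in> elemsT N ks"
    by (auto simp: elemsT_Cons2)
  have a: "phiK N k 0 x \<le> ksize k \<and> (phiK N k 0 x = ksize k \<longrightarrow> x = vK N k)" by (rule phiK0_le[OF xs(2)])
  have b: "cntT N ks xs' \<le> sizeT ks \<and> (cntT N ks xs' = sizeT ks \<longrightarrow> xs' = vT N ks)" by (rule Cons.IH[OF xs(3)])
  show ?case using a b xs(1) by (auto simp: sizeT_def vT_def)
qed

lemma count_rep[simp]: "count_list (replicate t a) a = t"
  by (induction t) auto

lemma cntT_v: "cntT N ks (vT N ks) = sizeT ks"
proof (induction ks)
  case (Cons k ks)
  then show ?case by (cases k) (auto simp: vT_def sizeT_def phiS_def epsS_def)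
qed (simp add: vT_def sizeT_def)

lemma cntT_u: "N \<ge> 2 \<Longrightarrow> cntT N ks (uT N ks) = 0"
  by (induction ks) (simp_all add: uT_def uv_eps_phi)

lemma iso_relpow:
  assumes "crystal_iso N A B Phi" "0 < N"
  shows "(f0 N A ^^ n) a b \<Longrightarrow> a \<in> elemsT N A \<Longrightarrow> (f0 N B ^^ n) (Phi a) (Phi b)"
proof (induction n arbitrary: a)
  case (Suc n)
  obtain y where y: "f0 N A a y" "(f0 N A ^^ n) y b" using relpowp_Suc_D2[OF Suc.prems(1)] by blast
  have ye: "y \<in> elemsT N A" using fT_elems[of N A 0 a y] y(1) Suc.prems(2) assms(2) by (simp add: f0_def)
  have "fT N B 0 (Phi a) = map_option Phi (fT N A 0 a)"
    using assms Suc.prems(2) unfolding crystal_iso_def by auto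
  then have "f0 N B (Phi a) (Phi y)" using y(1) by (simp add: f0_def)
  then show ?case using Suc.IH[OF y(2) ye] by (rule relpowp_Suc_I2)
qed simp

lemma iso_uv:
  assumes "crystal_iso N A B Phi" "sizeT A = sizeT B" "N \<ge> 2"
  shows "Phi (vT N A) = vT N B \<and> Phi (uT N A) = uT N B"
proof -
  have N0: "0 < N" "1 \<le> N" using assms(3) by auto
  have bij: "bij_betw Phi (elemsT N A) (elemsT N B)" using assms(1) unfolding crystal_iso_def by blast
  have "(f0 N A)\<^sup>*\<^sup>* (vT N A) (uT N A)" using V2U[OF assms(3)] by (simp add: f0_fstep)
  from rtranclp_imp_relpowp[OF this] obtain n where n: "(f0 N A ^^ n) (vT N A) (uT N A)" by (elim exE)
  have c1: "cntT N A (vT N A) = cntT N A (uT N A) + n" using relpow_cnt[OF n assms(3)] .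
  have nA: "n = sizeT A" using c1 cntT_v[of N A] cntT_u[OF assms(3), of A] by simp
  have m: "(f0 N B ^^ n) (Phi (vT N A)) (Phi (uT N A))"
    by (rule iso_relpow[OF assms(1) N0(1) n vT_elems[OF N0(2)]])
  have pe: "Phi (vT N A) \<in> elemsT N B" using bij_betw_apply[OF bij vT_elems[OF N0(2)]] .
  have "cntT N B (Phi (vT N A)) = cntT N B (Phi (uT N A)) + n" using relpow_cnt[OF m assms(3)] .
  then have "cntT N B (Phi (vT N A)) \<ge> sizeT B" using nA assms(2) by linarith
  then have v: "Phi (vT N A) = vT N B" using cntT_le[OF pe] by simp
  have "(f0 N B)\<^sup>*\<^sup>* (vT N B) (uT N B)" using V2U[OF assms(3)] by (simp add: f0_fstep)
  from rtranclp_imp_relpowp[OF this] obtain n' where n': "(f0 N B ^^ n') (vT N B) (uT N B)" by (elim exE)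
  have c2: "cntT N B (vT N B) = cntT N B (uT N B) + n'" using relpow_cnt[OF n' assms(3)] .
  have "n' = n" using c2 cntT_v[of N B] cntT_u[OF assms(3), of B] nA assms(2) by simp
  then have "Phi (uT N A) = uT N B" using relpow_det[OF m[unfolded v]] n' by blast
  then show ?thesis using v by simp
qed



lemma starW_u: "starW N (uK N k) = vK N k" by (cases k) (simp_all add: starW_def)
lemma starW_v: "starW N (vK N k) = uK N k" by (cases k) (simp_all add: starW_def)

lemma starT_u: "starT N (uT N ks) = vT N (rev ks)"
  by (simp add: starT_def uT_def vT_def rev_map starW_u o_def)

lemma starT_append: "starT N (a @ b) = starT N b @ starT N a"
  by (simp add: starT_def)

lemma starT_elems: "xs \<in> elemsT N ks \<Longrightarrow> starT N xs \<in> elemsT N (rev ks)"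
proof (induction ks arbitrary: xs)
  case (Cons k ks)
  then obtain x xs' where xs: "xs = x # xs'" "x \<in> elemsK N k" "xs' \<in> elemsT N ks"
    by (auto simp: elemsT_Cons2)
  have l: "length (starT N xs') = length (rev ks)" using elemsT_len[OF Cons.IH[OF xs(3)]] .
  show ?case using Cons.IH[OF xs(3)] star_elems[OF xs(2)] xs(1) l by simp
qed (simp add: starT_def)

lemma sizeT_rev: "sizeT (rev ks) = sizeT ks" by (simp add: sizeT_def rev_map[symmetric] sum_list_rev)

lemma main_lemma:
  assumes iso: "crystal_iso N C D R" and iso': "crystal_iso N (rev C) (rev D) R'"
    and sz: "sizeT C = sizeT D" and N2: "N \<ge> 2" and b: "b \<in> elemsT N C"
  shows "R' (starT N b) = starT N (R b)"
proof -
  have base: "R' (starT N (uT N C)) = starT N (R (uT N C))"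
  proof -
    have "R (uT N C) = uT N D" using iso_uv[OF iso sz N2] by simp
    moreover have "R' (vT N (rev C)) = vT N (rev D)" using iso_uv[OF iso' _ N2] sz by (simp add: sizeT_rev)
    ultimately show ?thesis by (simp add: starT_u)
  qed
  have path: "(fstep N C {..<N})\<^sup>*\<^sup>* b (uT N C)" by (rule conn[OF b N2])
  have "b \<in> elemsT N C \<longrightarrow> R' (starT N b) = starT N (R b)"
    using path
  proof (induction rule: converse_rtranclp_induct)
    case base
    then show ?case using \<open>R' (starT N (uT N C)) = starT N (R (uT N C))\<close> by simp
  next
    case (step y z)
    show ?case
    proof
      assume ye: "y \<in> elemsT N C"
      obtain i where i: "i < N" "fT N C i y = Some z" using step.hyps(1) by (auto simp: fstep_def)
      have ze: "z \<in> elemsT N C" by (rule fT_elems[OF i(2) ye i(1)])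
      have Qz: "R' (starT N z) = starT N (R z)" using step.IH ze by simp
      have s1: "fT N (rev C) (sig N i) (starT N z) = Some (starT N y)" by (rule star_T_f[OF i(2) ye i(1) N2])
      have sze: "starT N z \<in> elemsT N (rev C)" by (rule starT_elems[OF ze])
      have "fT N (rev D) (sig N i) (R' (starT N z)) = map_option R' (fT N (rev C) (sig N i) (starT N z))"
        using iso' sze sig_lt[OF i(1)] unfolding crystal_iso_def by auto
      then have a: "fT N (rev D) (sig N i) (R' (starT N z)) = Some (R' (starT N y))" using s1 by simp
      have "fT N D i (R y) = map_option R (fT N C i y)" using iso ye i(1) unfolding crystal_iso_def by auto
      then have rf: "fT N D i (R y) = Some (R z)" using i(2) by simp
      have rye: "R y \<in> elemsT N D" using iso ye unfolding crystal_iso_def bij_betw_def by auto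
      have b2: "fT N (rev D) (sig N i) (starT N (R z)) = Some (starT N (R y))" by (rule star_T_f[OF rf rye i(1) N2])
      show "R' (starT N y) = starT N (R y)" using a b2 Qz by simp
    qed
  qed
  then show ?thesis using b by simp
qed

theorem proposition25:
  fixes N n :: nat and B1 B2 :: "kind list"
    and R R' :: "nat list list \<Rightarrow> nat list list"
    and b1 b2 b1' b2' :: "nat list list"
  assumes "N = 2 * n" and "n \<ge> 1"
    and "\<forall>k \<in> set B1. kind_ok k" and "\<forall>k \<in> set B2. kind_ok k"
    and "crystal_iso N (B2 @ B1) (B1 @ B2) R"
    and "crystal_iso N (rev B1 @ rev B2) (rev B2 @ rev B1) R'"
    and "b1 \<in> elemsT N B1" and "b2 \<in> elemsT N B2"
    and "b1' \<in> elemsT N B1" and "b2' \<in> elemsT N B2"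
    and "R (b2 @ b1) = b1' @ b2'"
  shows "R' (starT N b1 @ starT N b2) = starT N b2' @ starT N b1'"
proof -
  have N2: "N \<ge> 2" using assms(1,2) by simp
  have iso': "crystal_iso N (rev (B2 @ B1)) (rev (B1 @ B2)) R'" using assms(6) by simp
  have sz: "sizeT (B2 @ B1) = sizeT (B1 @ B2)" by (simp add: sizeT_def)
  have l2: "length b2 = length B2" using elemsT_len[OF assms(8)] .
  have be: "b2 @ b1 \<in> elemsT N (B2 @ B1)" using assms(7,8) l2 by simp
  have "R' (starT N (b2 @ b1)) = starT N (R (b2 @ b1))" by (rule main_lemma[OF assms(5) iso' sz N2 be])
  then show ?thesis using assms(11) by (simp add: starT_append)
qed


end
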